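(* Let $G$ be an undirected graph with vertex set $V$ and integer edge weights. Choose $V_1\subseteq V$ uniformly at random (each vertex independently with probability $1/2$) and let $\overline V=V\setminus V_1$. Let $G'$ have vertex set $V\cup V_2$, where $V_2=\{u_2:u\in V_1\}$ consists of new copies, and edges: all edges of $G$; for every edge $\{u,v\}$ of $G$ with $u,v\in V_1$ an edge $\{u_2,v_2\}$ of the same weight; and for every edge $\{u,v\}$ of $G$ with $u\in V_1,v\in\overline V$ an edge $\{u_2,v\}$ of the same weight. Let $N(G')$ denote the number of vertices of $G'$ lying on a negative-weight triangle. If $G$ has no negative-weight triangle then $N(G')$ is even with probability $1$; if $G$ has a negative-weight triangle then $N(G')$ is odd with probability exactly $1/2$.
   Context: A negative-weight triangle is a set of three pairwise adjacent vertices whose three edge weights sum to a negative number. *)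

theory Defs
  imports "HOL-Probability.Probability"
begin

text \<open>A weighted undirected graph is given by a vertex set V, a symmetric
irreflexive adjacency relation E (edges only between vertices of V) and a
symmetric integer weight function w (only its values on edges matter).\<close>

definition neg_triangle ::
  "'v set \<Rightarrow> ('v \<Rightarrow> 'v \<Rightarrow> bool) \<Rightarrow> ('v \<Rightarrow> 'v \<Rightarrow> int) \<Rightarrow> 'v \<Rightarrow> 'v \<Rightarrow> 'v \<Rightarrow> bool" where
  "neg_triangle V E w a b c \<longleftrightarrow>
     a \<in> V \<and> b \<in> V \<and> c \<in> V \<and> a \<noteq> b \<and> b \<noteq> c \<and> a \<noteq> c \<and>
     E a b \<and> E b c \<and> E a c \<and> w a b + w b c + w a c < 0"

definition has_neg_triangle ::
  "'v set \<Rightarrow> ('v \<Rightarrow> 'v \<Rightarrow> bool) \<Rightarrow> ('v \<Rightarrow> 'v \<Rightarrow> int) \<Rightarrow> bool" where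
  "has_neg_triangle V E w \<longleftrightarrow> (\<exists>a b c. neg_triangle V E w a b c)"

definition num_neg_tri_vertices ::
  "'v set \<Rightarrow> ('v \<Rightarrow> 'v \<Rightarrow> bool) \<Rightarrow> ('v \<Rightarrow> 'v \<Rightarrow> int) \<Rightarrow> nat" where
  "num_neg_tri_vertices V E w = card {a \<in> V. \<exists>b c. neg_triangle V E w a b c}"

text \<open>The graph G' built from G and V1: vertices of V are \<open>Inl v\<close>, new copies
copies of u \<in> V1 are \<open>Inr u\<close>.\<close>

definition proj :: "'a + 'a \<Rightarrow> 'a" where
  "proj x = (case x of Inl v \<Rightarrow> v | Inr v \<Rightarrow> v)"

definition G'_verts :: "'a set \<Rightarrow> 'a set \<Rightarrow> ('a + 'a) set" where
  "G'_verts V V1 = Inl ` V \<union> Inr ` V1"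

fun G'_edge :: "'a set \<Rightarrow> 'a set \<Rightarrow> ('a \<Rightarrow> 'a \<Rightarrow> bool) \<Rightarrow> 'a + 'a \<Rightarrow> 'a + 'a \<Rightarrow> bool" where
  "G'_edge V V1 E (Inl u) (Inl v) = E u v"
| "G'_edge V V1 E (Inr u) (Inr v) = (u \<in> V1 \<and> v \<in> V1 \<and> E u v)"
| "G'_edge V V1 E (Inr u) (Inl v) = (u \<in> V1 \<and> v \<in> V - V1 \<and> E u v)"
| "G'_edge V V1 E (Inl v) (Inr u) = (u \<in> V1 \<and> v \<in> V - V1 \<and> E u v)"

definition G'_weight :: "('a \<Rightarrow> 'a \<Rightarrow> int) \<Rightarrow> 'a + 'a \<Rightarrow> 'a + 'a \<Rightarrow> int" where
  "G'_weight w x y = w (proj x) (proj y)"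

definition N_G' :: "'a set \<Rightarrow> ('a \<Rightarrow> 'a \<Rightarrow> bool) \<Rightarrow> ('a \<Rightarrow> 'a \<Rightarrow> int) \<Rightarrow> 'a set \<Rightarrow> nat" where
  "N_G' V E w V1 = num_neg_tri_vertices (G'_verts V V1) (G'_edge V V1 E) (G'_weight w)"

end

theory Submission
  imports Defs
begin

definition liftv :: "'a set \<Rightarrow> 'a \<Rightarrow> 'a + 'a" where
  "liftv V1 b = (if b \<in> V1 then Inr b else Inl b)"

lemma proj_simps[simp]: "proj (Inl a) = a" "proj (Inr a) = a"
  by (simp_all add: proj_def)

lemma proj_liftv[simp]: "proj (liftv V1 b) = b"
  by (simp add: liftv_def)

lemma edge_proj:
  assumes "G'_edge V V1 E x y" and sym: "\<And>u v. E u v \<Longrightarrow> E v u"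
  shows "E (proj x) (proj y)"
  using assms by (cases x; cases y) auto

lemma tri_down:
  assumes irr: "\<And>u. \<not> E u u" and inV: "\<And>u v. E u v \<Longrightarrow> u \<in> V \<and> v \<in> V"
    and sym: "\<And>u v. E u v \<Longrightarrow> E v u"
    and t: "neg_triangle (G'_verts V V1) (G'_edge V V1 E) (G'_weight w) x y z"
  shows "neg_triangle V E w (proj x) (proj y) (proj z)"
proof -
  have e: "E (proj x) (proj y)" "E (proj y) (proj z)" "E (proj x) (proj z)"
    using t edge_proj[where E=E, OF _ sym] unfolding neg_triangle_def by blast+
  have "proj x \<noteq> proj y" "proj y \<noteq> proj z" "proj x \<noteq> proj z"
    using e irr by metis+
  then show ?thesis using e inV t unfolding neg_triangle_def G'_weight_def by blast
qed

lemma tri_up_Inl: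
  assumes "neg_triangle V E w a b c"
  shows "neg_triangle (G'_verts V V1) (G'_edge V V1 E) (G'_weight w) (Inl a) (Inl b) (Inl c)"
  using assms unfolding neg_triangle_def G'_verts_def G'_weight_def by auto

lemma liftv_edge:
  assumes "a \<in> V1" "b \<in> V" "E a b" "V1 \<subseteq> V"
  shows "G'_edge V V1 E (Inr a) (liftv V1 b)"
  using assms by (auto simp: liftv_def)

lemma tri_up_Inr:
  assumes "neg_triangle V E w a b c" "a \<in> V1" "V1 \<subseteq> V"
    and sym: "\<And>u v. E u v \<Longrightarrow> E v u"
  shows "neg_triangle (G'_verts V V1) (G'_edge V V1 E) (G'_weight w) (Inr a) (liftv V1 b) (liftv V1 c)"
proof -
  have bc: "G'_edge V V1 E (liftv V1 b) (liftv V1 c)"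
    using assms unfolding neg_triangle_def liftv_def by (auto simp: sym)
  have d: "liftv V1 b \<noteq> liftv V1 c" "Inr a \<noteq> liftv V1 b" "Inr a \<noteq> liftv V1 c"
    using assms unfolding neg_triangle_def liftv_def by auto
  have m: "liftv V1 b \<in> G'_verts V V1" "liftv V1 c \<in> G'_verts V V1" "Inr a \<in> G'_verts V V1"
    using assms unfolding neg_triangle_def liftv_def G'_verts_def by auto
  show ?thesis using bc d m assms liftv_edge[of a V1 b V E] liftv_edge[of a V1 c V E]
    unfolding neg_triangle_def G'_weight_def by auto
qed

lemma N_set:
  fixes w :: "'a \<Rightarrow> 'a \<Rightarrow> int"
  assumes irr: "\<And>u. \<not> E u u" and inV: "\<And>u v. E u v \<Longrightarrow> u \<in> V \<and> v \<in> V"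
    and sym: "\<And>u v. E u v \<Longrightarrow> E v u" and sub: "V1 \<subseteq> V"
  defines "U \<equiv> {a \<in> V. \<exists>b c. neg_triangle V E w a b c}"
  shows "{x \<in> G'_verts V V1. \<exists>y z. neg_triangle (G'_verts V V1) (G'_edge V V1 E) (G'_weight w) x y z}
         = Inl ` U \<union> Inr ` (U \<inter> V1)"
proof (intro equalityI subsetI)
  fix x assume "x \<in> {x \<in> G'_verts V V1. \<exists>y z. neg_triangle (G'_verts V V1) (G'_edge V V1 E) (G'_weight w) x y z}"
  then obtain y z where x: "x \<in> G'_verts V V1" and t: "neg_triangle (G'_verts V V1) (G'_edge V V1 E) (G'_weight w) x y z" by auto
  have "neg_triangle V E w (proj x) (proj y) (proj z)" using tri_down[where E=E, OF irr inV sym t] .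
  hence "proj x \<in> U" unfolding U_def neg_triangle_def by blast
  then show "x \<in> Inl ` U \<union> Inr ` (U \<inter> V1)" using x unfolding G'_verts_def by auto
next
  fix x assume "x \<in> Inl ` U \<union> Inr ` (U \<inter> V1)"
  then show "x \<in> {x \<in> G'_verts V V1. \<exists>y z. neg_triangle (G'_verts V V1) (G'_edge V V1 E) (G'_weight w) x y z}"
  proof
    assume "x \<in> Inl ` U"
    then obtain a b c where "x = Inl a" "neg_triangle V E w a b c" unfolding U_def by auto
    then show ?thesis using tri_up_Inl[of V E w a b c V1] unfolding neg_triangle_def by blast
  next
    assume "x \<in> Inr ` (U \<inter> V1)"
    then obtain a b c where "x = Inr a" "a \<in> V1" "neg_triangle V E w a b c" unfolding U_def by auto
    then show ?thesis using tri_up_Inr[of V E w a b c V1] sub sym unfolding neg_triangle_def by blast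
  qed
qed

lemma N_parity:
  assumes fin: "finite V" and irr: "\<And>u. \<not> E u u" and inV: "\<And>u v. E u v \<Longrightarrow> u \<in> V \<and> v \<in> V"
    and sym: "\<And>u v. E u v \<Longrightarrow> E v u" and sub: "V1 \<subseteq> V"
  shows "N_G' V E w V1 = 2 * card ({a \<in> V. \<exists>b c. neg_triangle V E w a b c} \<inter> V1)
            + card ({a \<in> V. \<exists>b c. neg_triangle V E w a b c} - V1)"
proof -
  define U where "U = {a \<in> V. \<exists>b c. neg_triangle V E w a b c}"
  have fU: "finite U" using fin unfolding U_def by auto
  have "N_G' V E w V1 = card (Inl ` U \<union> Inr ` (U \<inter> V1))"
    unfolding N_G'_def num_neg_tri_vertices_def using N_set[where E=E and w=w, OF irr inV sym sub] U_def by simp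
  also have "\<dots> = card U + card (U \<inter> V1)"
    using fU by (subst card_Un_disjoint) (auto simp: card_image)
  also have "card U = card (U \<inter> V1) + card (U - V1)"
    using fU by (metis Diff_Diff_Int card_Diff_subset_Int finite_Diff inf.cobounded1 inf_commute
          card_Int_Diff)
  finally show ?thesis unfolding U_def by simp
qed

lemma toggle_half:
  fixes U V :: "'a set" and u0 :: 'a
  assumes fin: "finite V" and U: "U \<subseteq> V" and u0: "u0 \<in> U"
  shows "card (Pow V \<inter> {X. odd (card (U - X))}) * 2 = card (Pow V)"
proof -
  define f where "f X = (if u0 \<in> X then X - {u0} else insert u0 X)" for X
  have fU: "finite U" using fin U finite_subset by blast
  have ff: "f (f X) = X" for X unfolding f_def by auto
  have par: "odd (card (U - f X)) \<longleftrightarrow> even (card (U - X))" for X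
  proof (cases "u0 \<in> X")
    case True
    have "U - f X = insert u0 (U - X)" using True u0 unfolding f_def by auto
    then show ?thesis using True fU by simp
  next
    case False
    have "U - f X = (U - X) - {u0}" using False unfolding f_def by auto
    moreover have "u0 \<in> U - X" using False u0 by auto
    moreover have "card (U - X) > 0" using calculation(2) fU card_gt_0_iff by blast
    ultimately show ?thesis using fU by auto
  qed
  let ?O = "Pow V \<inter> {X. odd (card (U - X))}" and ?Ev = "Pow V \<inter> {X. even (card (U - X))}"
  have fP: "X \<in> Pow V \<Longrightarrow> f X \<in> Pow V" for X using U u0 unfolding f_def by auto
  have "bij_betw f ?O ?Ev"
  proof (rule bij_betwI[where g=f])
    have "odd (card (U - X)) \<Longrightarrow> even (card (U - f X))" for X
      using par[of "f X"] ff[of X] by simp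
    then show "f \<in> ?O \<rightarrow> ?Ev" using fP by auto
    show "f \<in> ?Ev \<rightarrow> ?O" using fP par by auto
  qed (auto simp: ff)
  hence "card ?O = card ?Ev" by (rule bij_betw_same_card)
  moreover have "card ?O + card ?Ev = card (Pow V)"
    using fin by (subst card_Un_disjoint[symmetric]) (auto intro: arg_cong[where f=card])
  ultimately show ?thesis by simp
qed

theorem mainTheorem9:
  fixes V :: "'a set" and E :: "'a \<Rightarrow> 'a \<Rightarrow> bool" and w :: "'a \<Rightarrow> 'a \<Rightarrow> int"
  assumes "finite V"
    and "\<And>u v. E u v \<Longrightarrow> u \<in> V \<and> v \<in> V"
    and "\<And>u v. E u v \<Longrightarrow> E v u"
    and "\<And>u. \<not> E u u"
    and "\<And>u v. w u v = w v u"
  shows "(\<not> has_neg_triangle V E w \<longrightarrow>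
            measure_pmf.prob (pmf_of_set (Pow V)) {V1. even (N_G' V E w V1)} = 1)
       \<and> (has_neg_triangle V E w \<longrightarrow>
            measure_pmf.prob (pmf_of_set (Pow V)) {V1. odd (N_G' V E w V1)} = 1/2)"
proof -
  define U where "U = {a \<in> V. \<exists>b c. neg_triangle V E w a b c}"
  have NP: "V1 \<in> Pow V \<Longrightarrow> odd (N_G' V E w V1) \<longleftrightarrow> odd (card (U - V1))" for V1
    using N_parity[where E=E and w=w, OF assms(1) assms(4) assms(2) assms(3), of V1] unfolding U_def
    by simp
  have fP: "finite (Pow V)" "Pow V \<noteq> {}" using assms(1) by auto
  have prob: "measure_pmf.prob (pmf_of_set (Pow V)) A = card (Pow V \<inter> A) / card (Pow V)" for A
    using measure_pmf_of_set[OF fP(2) fP(1)] .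
  show ?thesis
  proof (intro conjI impI)
    assume "\<not> has_neg_triangle V E w"
    hence "U = {}" unfolding U_def has_neg_triangle_def by auto
    hence "Pow V \<inter> {V1. even (N_G' V E w V1)} = Pow V" using NP by auto
    then show "measure_pmf.prob (pmf_of_set (Pow V)) {V1. even (N_G' V E w V1)} = 1"
      using prob fP by (simp add: card_gt_0_iff)
  next
    assume "has_neg_triangle V E w"
    then obtain a b c where t: "neg_triangle V E w a b c" unfolding has_neg_triangle_def by auto
    hence u0: "a \<in> U" unfolding U_def neg_triangle_def by auto
    have UV: "U \<subseteq> V" unfolding U_def by auto
    have eq: "Pow V \<inter> {V1. odd (N_G' V E w V1)} = Pow V \<inter> {X. odd (card (U - X))}"
      using NP by auto
    have "card (Pow V \<inter> {X. odd (card (U - X))}) * 2 = card (Pow V)"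
      by (rule toggle_half[OF assms(1) UV u0])
    moreover have "card (Pow V) > 0" using fP by (simp add: card_gt_0_iff)
    ultimately show "measure_pmf.prob (pmf_of_set (Pow V)) {V1. odd (N_G' V E w V1)} = 1/2"
      unfolding prob eq by (simp add: field_simps flip: of_nat_mult)
  qed
qed

end
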